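(* Let $G$ be a connected graph of order $n$ and stability number $\alpha$ such that $F(G) \ge F(H)$ for every connected graph $H$ of order $n$ and stability number $\alpha$. Then either $G$ is $\alpha$-critical, or $G$ has an $\alpha$-critical decomposition.
   Context: All graphs are finite, simple and undirected; $\alpha(G)$ denotes the stability number. The Fibonacci index $F(G)$ is the number of stable sets of $G$, including the empty set. For an edge $e$, $G-e$ denotes $G$ with the edge $e$ deleted. An edge $e$ is $\alpha$-critical if $\alpha(G-e)>\alpha(G)$ and $\alpha$-safe otherwise; a graph is $\alpha$-critical if all its edges are $\alpha$-critical (a graph with no edge counts as $\alpha$-critical). A bridge of a connected graph $G$ is an edge $e$ such that $G-e$ is disconnected. For an $\alpha$-safe bridge $e=v_1v_2$ of $G$, the associated decomposition is $(G_1,v_1,G_2,v_2)$ where $G_1,G_2$ are the two connected components of $G-e$ with $v_1\in V(G_1)$, $v_2\in V(G_2)$. A decomposition $(G_1,v_1,G_2,v_2)$ is $\alpha$-critical if $G_1$ is $\alpha$-critical. *)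

theory Defs
  imports Main
begin

definition is_graph :: "'a set \<Rightarrow> 'a set set \<Rightarrow> bool" where
  "is_graph V E \<longleftrightarrow> finite V \<and> (\<forall>e\<in>E. \<exists>u v. e = {u, v} \<and> u \<noteq> v \<and> u \<in> V \<and> v \<in> V)"

definition stable_set :: "'a set \<Rightarrow> 'a set set \<Rightarrow> 'a set \<Rightarrow> bool" where
  "stable_set V E S \<longleftrightarrow> S \<subseteq> V \<and> (\<forall>u\<in>S. \<forall>v\<in>S. {u, v} \<notin> E)"

definition alpha :: "'a set \<Rightarrow> 'a set set \<Rightarrow> nat" where
  "alpha V E = Max (card ` {S. stable_set V E S})"

text \<open>Fibonacci index: number of stable sets (including the empty set).\<close>
definition fib_index :: "'a set \<Rightarrow> 'a set set \<Rightarrow> nat" where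
  "fib_index V E = card {S. stable_set V E S}"

definition adj :: "'a set set \<Rightarrow> 'a \<Rightarrow> 'a \<Rightarrow> bool" where
  "adj E u v \<longleftrightarrow> {u, v} \<in> E"

definition connected_graph :: "'a set \<Rightarrow> 'a set set \<Rightarrow> bool" where
  "connected_graph V E \<longleftrightarrow> V \<noteq> {} \<and> (\<forall>u\<in>V. \<forall>v\<in>V. (adj E)\<^sup>*\<^sup>* u v)"

definition alpha_critical_edge :: "'a set \<Rightarrow> 'a set set \<Rightarrow> 'a set \<Rightarrow> bool" where
  "alpha_critical_edge V E e \<longleftrightarrow> alpha V (E - {e}) > alpha V E"

definition alpha_critical_graph :: "'a set \<Rightarrow> 'a set set \<Rightarrow> bool" where
  "alpha_critical_graph V E \<longleftrightarrow> (\<forall>e\<in>E. alpha_critical_edge V E e)"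

definition is_bridge :: "'a set \<Rightarrow> 'a set set \<Rightarrow> 'a set \<Rightarrow> bool" where
  "is_bridge V E e \<longleftrightarrow> e \<in> E \<and> connected_graph V E \<and> \<not> connected_graph V (E - {e})"

definition comp_verts :: "'a set \<Rightarrow> 'a set set \<Rightarrow> 'a \<Rightarrow> 'a set" where
  "comp_verts V E x = {w \<in> V. (adj E)\<^sup>*\<^sup>* x w}"

definition comp_edges :: "'a set \<Rightarrow> 'a set set \<Rightarrow> 'a \<Rightarrow> 'a set set" where
  "comp_edges V E x = {f \<in> E. f \<subseteq> comp_verts V E x}"

text \<open>G has an alpha-critical decomposition: there is an alpha-safe bridge e = v1 v2
  such that the component G1 of G - e containing v1 is alpha-critical.\<close>
definition has_alpha_critical_decomposition :: "'a set \<Rightarrow> 'a set set \<Rightarrow> bool" where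
  "has_alpha_critical_decomposition V E \<longleftrightarrow>
     (\<exists>v1 v2. v1 \<noteq> v2 \<and> is_bridge V E {v1, v2} \<and> \<not> alpha_critical_edge V E {v1, v2} \<and>
        alpha_critical_graph (comp_verts V (E - {{v1, v2}}) v1) (comp_edges V (E - {{v1, v2}}) v1))"

end

theory Submission
  imports Defs
begin

lemma stable_finite: "finite V \<Longrightarrow> finite {S. stable_set V E S}"
  by (rule finite_subset[of _ "Pow V"]) (auto simp: stable_set_def)

lemma stable_empty: "stable_set V E {}"
  by (simp add: stable_set_def)

lemma alpha_ge: "finite V \<Longrightarrow> stable_set V E S \<Longrightarrow> card S \<le> alpha V E"
  unfolding alpha_def by (rule Max_ge) (auto intro: stable_finite)

lemma alpha_obtain: "finite V \<Longrightarrow> \<exists>S. stable_set V E S \<and> card S = alpha V E"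
proof -
  assume f: "finite V"
  have "alpha V E \<in> card ` {S. stable_set V E S}"
    unfolding alpha_def using stable_finite[OF f, of E] stable_empty[of V E]
    by (intro Max_in) auto
  then show ?thesis by auto
qed

lemma stable_mono: "E' \<subseteq> E \<Longrightarrow> stable_set V E S \<Longrightarrow> stable_set V E' S"
  unfolding stable_set_def by blast

lemma alpha_mono: "finite V \<Longrightarrow> E' \<subseteq> E \<Longrightarrow> alpha V E \<le> alpha V E'"
  using alpha_obtain[of V E] alpha_ge stable_mono by metis

lemma rtr_sym: "(adj E)\<^sup>*\<^sup>* u v \<Longrightarrow> (adj E)\<^sup>*\<^sup>* v u"
proof (induction rule: rtranclp_induct)
  case base then show ?case by simp
next
  case (step y z)
  have "adj E z y" using step(2) by (simp add: adj_def insert_commute)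
  then show ?case using step(3) by (meson converse_rtranclp_into_rtranclp)
qed

lemma reroute:
  assumes "(adj (E - {f}))\<^sup>*\<^sup>* v a" "(adj (E - {f}))\<^sup>*\<^sup>* v b" "f = {a, b}"
  shows "(adj E)\<^sup>*\<^sup>* v y \<Longrightarrow> (adj (E - {f}))\<^sup>*\<^sup>* v y"
proof (induction rule: rtranclp_induct)
  case base then show ?case by simp
next
  case (step z y)
  show ?case
  proof (cases "{z, y} = f")
    case True
    then have "y = a \<or> y = b" using assms(3) by auto
    then show ?thesis using assms by auto
  next
    case False
    then have "adj (E - {f}) z y" using step(2) by (simp add: adj_def)
    then show ?thesis using step(3) by (meson rtranclp.rtrancl_into_rtrancl)
  qed
qed

lemma fib_less:
  assumes g: "is_graph V E" and e: "e \<in> E"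
  shows "fib_index V E < fib_index V (E - {e})"
proof -
  have fin: "finite V" using g by (simp add: is_graph_def)
  obtain u v where uv: "e = {u, v}" "u \<noteq> v" "u \<in> V" "v \<in> V"
    using g e unfolding is_graph_def by blast
  have sub: "{S. stable_set V E S} \<subseteq> {S. stable_set V (E - {e}) S}"
    using stable_mono[of "E - {e}" E V] by blast
  have "stable_set V (E - {e}) e"
  proof -
    have "\<And>x. {x} \<notin> E" using g unfolding is_graph_def
      by (metis doubleton_eq_iff insert_absorb2 insert_not_empty singleton_insert_inj_eq)
    then show ?thesis using uv unfolding stable_set_def by (auto simp: insert_commute)
  qed
  moreover have "\<not> stable_set V E e" using uv e unfolding stable_set_def by auto
  ultimately have "{S. stable_set V E S} \<subset> {S. stable_set V (E - {e}) S}"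
    using sub by blast
  then show ?thesis unfolding fib_index_def
    by (intro psubset_card_mono stable_finite fin)
qed

lemma safe_is_bridge:
  fixes V :: "'a set" and E :: "'a set set"
  assumes g: "is_graph V E" and c: "connected_graph V E"
    and mx: "\<forall>(W :: 'a set) (D :: 'a set set). is_graph W D \<and> connected_graph W D \<and>
           card W = card V \<and> alpha W D = alpha V E \<longrightarrow> fib_index V E \<ge> fib_index W D"
    and e: "e \<in> E" and s: "\<not> alpha_critical_edge V E e"
  shows "is_bridge V E e"
proof (rule ccontr)
  assume "\<not> is_bridge V E e"
  then have c2: "connected_graph V (E - {e})" using e c by (simp add: is_bridge_def)
  have fin: "finite V" using g by (simp add: is_graph_def)
  have g2: "is_graph V (E - {e})" using g by (simp add: is_graph_def)
  have "alpha V (E - {e}) = alpha V E"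
    using s alpha_mono[OF fin, of "E - {e}" E] by (auto simp: alpha_critical_edge_def)
  then have "fib_index V E \<ge> fib_index V (E - {e})" using mx g2 c2 by blast
  with fib_less[OF g e] show False by simp
qed


lemma edge_sub: "is_graph V E \<Longrightarrow> e \<in> E \<Longrightarrow> e \<subseteq> V"
  unfolding is_graph_def by fastforce

lemma alpha_transfer:
  assumes g: "is_graph V E" and sfe: "\<not> alpha_critical_edge V E e"
    and fE1: "f \<in> comp_edges V (E - {e}) v1"
    and sf1: "\<not> alpha_critical_edge (comp_verts V (E - {e}) v1) (comp_edges V (E - {e}) v1) f"
  shows "\<not> alpha_critical_edge V E f"
proof -
  define V1 where "V1 = comp_verts V (E - {e}) v1"
  define E1 where "E1 = comp_edges V (E - {e}) v1"
  have fin: "finite V" using g by (simp add: is_graph_def)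
  have V1V: "V1 \<subseteq> V" by (auto simp: V1_def comp_verts_def)
  have fin1: "finite V1" using fin V1V finite_subset by blast
  have E1: "E1 = {g \<in> E - {e}. g \<subseteq> V1}" by (simp add: E1_def comp_edges_def V1_def)
  obtain S where S: "stable_set V (E - {f}) S" "card S = alpha V (E - {f})"
    using alpha_obtain[OF fin] by blast
  define S1 where "S1 = S \<inter> V1"
  define S2 where "S2 = S - V1"
  have "stable_set V1 (E1 - {f}) S1"
    using S(1) unfolding stable_set_def S1_def E1 by blast
  then have "card S1 \<le> alpha V1 (E1 - {f})" using alpha_ge[OF fin1] by blast
  also have "\<dots> \<le> alpha V1 E1" using sf1 by (simp add: alpha_critical_edge_def V1_def E1_def)
  finally have c1: "card S1 \<le> alpha V1 E1" .
  obtain T1 where T1: "stable_set V1 E1 T1" "card T1 = alpha V1 E1"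
    using alpha_obtain[OF fin1] by blast
  have fsub: "f \<subseteq> V1" using fE1 E1 E1_def by blast
  have cross: "{u, w} \<notin> E - {e}" if "u \<in> T1" "w \<in> S2" for u w
  proof
    assume a: "{u, w} \<in> E - {e}"
    have "u \<in> V1" using T1(1) that(1) by (auto simp: stable_set_def)
    then have "(adj (E - {e}))\<^sup>*\<^sup>* v1 u" by (simp add: V1_def comp_verts_def)
    moreover have "adj (E - {e}) u w" using a by (simp add: adj_def)
    ultimately have "(adj (E - {e}))\<^sup>*\<^sup>* v1 w" by (meson rtranclp.rtrancl_into_rtrancl)
    moreover have "w \<in> V" using that(2) S(1) by (auto simp: S2_def stable_set_def)
    ultimately have "w \<in> V1" by (simp add: V1_def comp_verts_def)
    then show False using that(2) by (simp add: S2_def)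
  qed
  have "stable_set V (E - {e}) (T1 \<union> S2)"
    unfolding stable_set_def
  proof (intro conjI ballI)
    show "T1 \<union> S2 \<subseteq> V" using T1(1) S(1) V1V unfolding stable_set_def S2_def by blast
  next
    fix u w assume u: "u \<in> T1 \<union> S2" and w: "w \<in> T1 \<union> S2"
    show "{u, w} \<notin> E - {e}"
    proof (cases "u \<in> T1")
      case uT: True
      show ?thesis
      proof (cases "w \<in> T1")
        case True
        then show ?thesis using uT T1(1) E1 unfolding stable_set_def by blast
      next
        case False
        then show ?thesis using uT w cross by blast
      qed
    next
      case uF: False
      then have uS: "u \<in> S2" using u by blast
      show ?thesis
      proof (cases "w \<in> T1")
        case True
        then show ?thesis using uS cross by (metis insert_commute)
      next
        case False
        then have wS: "w \<in> S2" using w by blast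
        have "{u, w} \<notin> E - {f}" using uS wS S(1) unfolding stable_set_def S2_def by blast
        moreover have "{u, w} \<noteq> f" using fsub uS unfolding S2_def by blast
        ultimately show ?thesis by blast
      qed
    qed
  qed
  then have "card (T1 \<union> S2) \<le> alpha V (E - {e})" using alpha_ge[OF fin] by blast
  moreover have "card (T1 \<union> S2) = card T1 + card S2"
  proof (rule card_Un_disjoint)
    show "finite T1" using T1(1) fin1 finite_subset unfolding stable_set_def by blast
    show "finite S2" using S(1) fin finite_subset unfolding stable_set_def S2_def by blast
    show "T1 \<inter> S2 = {}" using T1(1) unfolding stable_set_def S2_def by blast
  qed
  moreover have "card S = card S1 + card S2"
  proof -
    have "finite S" using S(1) fin finite_subset unfolding stable_set_def by blast
    have "S = S1 \<union> S2" by (auto simp: S1_def S2_def)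
    then have "card S = card (S1 \<union> S2)" by simp
    also have "\<dots> = card S1 + card S2"
      using \<open>finite S\<close> by (intro card_Un_disjoint) (auto simp: S1_def S2_def)
    finally show ?thesis .
  qed
  moreover have "alpha V (E - {e}) \<le> alpha V E" using sfe by (simp add: alpha_critical_edge_def)
  ultimately show ?thesis using c1 T1(2) S(2) by (simp add: alpha_critical_edge_def)
qed


lemma comp_smaller:
  assumes fin: "finite V" and v12: "v1 \<noteq> v2" and v1V: "v1 \<in> V"
    and xV1: "x \<in> comp_verts V (E - {{v1, v2}}) v1"
    and nr: "\<not> (adj (E - {f}))\<^sup>*\<^sup>* v1 x"
  shows "card (comp_verts V (E - {f}) x) < card (comp_verts V (E - {{v1, v2}}) v1)"
proof -
  let ?e = "{v1, v2}"
  have nr2: "\<not> (adj (E - {f}))\<^sup>*\<^sup>* x v1"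
  proof
    assume "(adj (E - {f}))\<^sup>*\<^sup>* x v1"
    then have "(adj (E - {f}))\<^sup>*\<^sup>* v1 x" by (rule rtr_sym)
    with nr show False by simp
  qed
  have reach: "(adj (E - {f}))\<^sup>*\<^sup>* x w \<Longrightarrow> (adj (E - {?e}))\<^sup>*\<^sup>* v1 w" for w
  proof (induction rule: rtranclp_induct)
    case base then show ?case using xV1 by (simp add: comp_verts_def)
  next
    case (step z w)
    show ?case
    proof (cases "{z, w} = ?e")
      case True
      then have "z = v1 \<or> w = v1" using v12 by (auto simp: doubleton_eq_iff)
      moreover have "(adj (E - {f}))\<^sup>*\<^sup>* x w"
        using step(1,2) by (rule rtranclp.rtrancl_into_rtrancl)
      ultimately show ?thesis
      proof (elim disjE)
        assume "(adj (E - {f}))\<^sup>*\<^sup>* x w" "z = v1"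
        then show ?thesis using step(1) nr2 by simp
      next
        assume "(adj (E - {f}))\<^sup>*\<^sup>* x w" "w = v1"
        then show ?thesis using nr2 by simp
      qed
    next
      case False
      then have "adj (E - {?e}) z w" using step(2) by (simp add: adj_def)
      then show ?thesis using step(3) by (meson rtranclp.rtrancl_into_rtrancl)
    qed
  qed
  have sub: "comp_verts V (E - {f}) x \<subseteq> comp_verts V (E - {?e}) v1"
    proof
    fix w assume "w \<in> comp_verts V (E - {f}) x"
    then have "w \<in> V" "(adj (E - {f}))\<^sup>*\<^sup>* x w" by (simp_all add: comp_verts_def)
    then show "w \<in> comp_verts V (E - {?e}) v1" using reach by (simp add: comp_verts_def)
  qed
  have "v1 \<notin> comp_verts V (E - {f}) x" using nr2 by (simp add: comp_verts_def)
  moreover have "v1 \<in> comp_verts V (E - {?e}) v1" using v1V by (simp add: comp_verts_def)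
  ultimately have "comp_verts V (E - {f}) x \<subset> comp_verts V (E - {?e}) v1" using sub by blast
  moreover have "finite (comp_verts V (E - {?e}) v1)" using fin unfolding comp_verts_def by (rule finite_subset[rotated]) blast
  ultimately show ?thesis by (rule psubset_card_mono[rotated])
qed

theorem mainTheorem8:
  fixes V :: "'a set" and E :: "'a set set"
  assumes "is_graph V E" and "connected_graph V E"
    and "\<forall>(W :: 'a set) (D :: 'a set set). is_graph W D \<and> connected_graph W D \<and>
           card W = card V \<and> alpha W D = alpha V E \<longrightarrow> fib_index V E \<ge> fib_index W D"
  shows "alpha_critical_graph V E \<or> has_alpha_critical_decomposition V E"
proof (cases "alpha_critical_graph V E")
  case True then show ?thesis by simp
next
  case False
  note g = assms(1) and c = assms(2) and mx = assms(3)
  have fin: "finite V" using g by (simp add: is_graph_def)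
  from False obtain e where e: "e \<in> E" "\<not> alpha_critical_edge V E e"
    by (auto simp: alpha_critical_graph_def)
  obtain u v where uv: "e = {u, v}" "u \<noteq> v" using g e unfolding is_graph_def by blast
  define P where "P = (\<lambda>(a::'a, b). a \<noteq> b \<and> is_bridge V E {a, b} \<and> \<not> alpha_critical_edge V E {a, b})"
  define m where "m = (\<lambda>(a::'a, b::'a). card (comp_verts V (E - {{a, b}}) a))"
  have "P (u, v)" using safe_is_bridge[OF g c mx e(1,2)] e(2) uv unfolding P_def by auto
  from ex_has_least_nat[of P "(u, v)" m, OF this]
  obtain p where p1: "P p" and p2: "\<forall>q. P q \<longrightarrow> m p \<le> m q" by (elim exE conjE)
  have pp: "\<And>q. P q \<Longrightarrow> m p \<le> m q" by (rule p2[rule_format])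
  note p = p1 pp
  obtain v1 v2 where pv: "p = (v1, v2)" by (cases p)
  have P1: "v1 \<noteq> v2" "is_bridge V E {v1, v2}" "\<not> alpha_critical_edge V E {v1, v2}"
    using p(1) pv unfolding P_def by auto
  have "{v1, v2} \<in> E" using P1(2) by (simp add: is_bridge_def)
  then have v1V: "v1 \<in> V" using edge_sub[OF g] by blast
  have "alpha_critical_graph (comp_verts V (E - {{v1, v2}}) v1) (comp_edges V (E - {{v1, v2}}) v1)"
    unfolding alpha_critical_graph_def
  proof (rule ballI, rule ccontr)
    fix f assume fE1: "f \<in> comp_edges V (E - {{v1, v2}}) v1"
      and nc: "\<not> alpha_critical_edge (comp_verts V (E - {{v1, v2}}) v1) (comp_edges V (E - {{v1, v2}}) v1) f"
    have sf: "\<not> alpha_critical_edge V E f"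
      using alpha_transfer[OF g P1(3) fE1 nc] .
    have fE: "f \<in> E" using fE1 by (simp add: comp_edges_def)
    have br: "is_bridge V E f" using safe_is_bridge[OF g c mx fE sf] .
    obtain a b where ab: "f = {a, b}" "a \<noteq> b" using g fE unfolding is_graph_def by blast
    have fsub: "f \<subseteq> comp_verts V (E - {{v1, v2}}) v1" using fE1 by (simp add: comp_edges_def)
    have key: False if xy: "f = {x, y}" "x \<noteq> y" and nr: "\<not> (adj (E - {f}))\<^sup>*\<^sup>* v1 x" for x y
    proof -
      have "P (x, y)" using xy br sf unfolding P_def by auto
      then have le: "m p \<le> m (x, y)" by (rule p(2))
      have "x \<in> comp_verts V (E - {{v1, v2}}) v1" using fsub xy(1) by blast
      from comp_smaller[OF fin P1(1) v1V this nr]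
      have "m (x, y) < m p" unfolding m_def pv xy(1) by simp
      with le show False by simp
    qed
    have ra: "(adj (E - {f}))\<^sup>*\<^sup>* v1 a" using key[of a b] ab by blast
    have rb: "(adj (E - {f}))\<^sup>*\<^sup>* v1 b" using key[of b a] ab insert_commute[of a b "{}"] by metis
    have "connected_graph V (E - {f})"
      unfolding connected_graph_def
    proof (intro conjI ballI)
      show "V \<noteq> {}" using v1V by blast
    next
      fix s t assume s: "s \<in> V" and t: "t \<in> V"
      have "(adj E)\<^sup>*\<^sup>* v1 s" "(adj E)\<^sup>*\<^sup>* v1 t" using c s t v1V by (auto simp: connected_graph_def)
      then have "(adj (E - {f}))\<^sup>*\<^sup>* v1 s" "(adj (E - {f}))\<^sup>*\<^sup>* v1 t"
        using reroute[OF ra rb ab(1)] by auto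
      then show "(adj (E - {f}))\<^sup>*\<^sup>* s t" by (metis rtr_sym rtranclp_trans)
    qed
    then show False using br by (simp add: is_bridge_def)
  qed
  then have "has_alpha_critical_decomposition V E"
    unfolding has_alpha_critical_decomposition_def using P1 by blast
  then show ?thesis by simp
qed

end
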